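(* Let $\ell\in\mathbb{N}$ and $\alpha_j,\beta_j\in\mathbb{N}$ (positive integers) for $j=1,\dots,\ell$. Then, as formal power series in $t$ and $q$, $$\mathbf{R}^{\alpha_1}\Big[\mathbf{y}^{\beta_1}\mathbf{R}^{\alpha_2}\big[\mathbf{y}^{\beta_2}\cdots\mathbf{R}^{\alpha_\ell}[\mathbf{y}^{\beta_\ell}]\cdots\big]\Big](t)=\sum_{\substack{j_1\ge\beta_1,\dots,j_\ell\ge\beta_\ell\\ k_1\ge\alpha_1,\dots,k_\ell\ge\alpha_\ell}}\prod_{r=1}^\ell\left[\binom{j_r-1}{\beta_r-1}\binom{k_r-1}{\alpha_r-1}q^{k_r\sum_{s=r}^\ell j_s}t^{j_r}\right].$$
   Context: $\mathbf{y}(t)=\frac{t}{1-t}$, and $\mathbf{y}^{\beta}$ denotes multiplication by the series $\mathbf{y}(t)^\beta$. $\mathbf{R}$ is the operator on formal power series $f(t)$ (with coefficients in $\mathbb{Q}[[q]]$ and no constant term in $t$) given by $\mathbf{R}[f](t)=\sum_{k\ge1}f(q^kt)$, and $\mathbf{R}^{n}$ is its $n$-fold composition. *)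

theory Defs
  imports "HOL-Computational_Algebra.Formal_Power_Series" "HOL-Library.FuncSet"
begin

text \<open>Bivariate formal power series: series in t with coefficients in Q[[q]],
  i.e. elements of type rat fps fps. The outer variable is t, the inner one q.\<close>

type_synonym bfps = "rat fps fps"

definition yser :: bfps where
  "yser = Abs_fps (\<lambda>n. if n = 0 then 0 else 1)"

definition qgeom :: "nat \<Rightarrow> rat fps" where
  "qgeom n = Abs_fps (\<lambda>m. if 0 < n \<and> 0 < m \<and> n dvd m then 1 else 0)"

text \<open>R[f](t) = sum over k>=1 of f(q^k t). Coefficientwise: the t^n coefficient
  of f(q^k t) is f_n q^(k n), so the t^n coefficient of R[f] is
  f_n * (sum over k>=1 of q^(k n)). R is only applied to series without constant
  term in t; the t^0 coefficient of R[f] is set to 0.\<close>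
definition Rop :: "bfps \<Rightarrow> bfps" where
  "Rop f = Abs_fps (\<lambda>n. if n = 0 then 0 else fps_nth f n * qgeom n)"

function nestR :: "(nat \<Rightarrow> nat) \<Rightarrow> (nat \<Rightarrow> nat) \<Rightarrow> nat \<Rightarrow> nat \<Rightarrow> bfps" where
  "nestR alpha beta l r =
     (if l < r then 1
      else (Rop ^^ alpha r) (yser ^ beta r * nestR alpha beta l (Suc r)))"
  by pat_completeness auto
termination by (relation "measure (\<lambda>(_, _, l, r). Suc l - r)") auto

end

theory Submission
  imports Defs
begin
unbundle fps_syntax
declare nestR.simps[simp del]


definition gser :: "nat \<Rightarrow> 'a::comm_semiring_1 fps" where
  "gser n = Abs_fps (\<lambda>m. if 0 < n \<and> 0 < m \<and> n dvd m then 1 else 0)"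

definition cl :: "nat \<Rightarrow> nat \<Rightarrow> nat \<Rightarrow> nat" where
  "cl n a x = (if n dvd x \<and> a \<le> x div n then (x div n - 1) choose (a - 1) else 0)"

lemma L1:
  fixes f :: "nat \<Rightarrow> 'a::comm_semiring_1"
  assumes n: "0 < n"
  shows "(\<Sum>i=0..m. f i * of_nat (cl n a (m - i))) =
         (\<Sum>b\<in>{b. a \<le> b \<and> b * n \<le> m}. of_nat ((b - 1) choose (a - 1)) * f (m - b * n))"
proof -
  have "(\<Sum>i=0..m. f i * of_nat (cl n a (m - i))) = (\<Sum>x=0..m. f (m - x) * of_nat (cl n a x))"
    by (rule sum.reindex_bij_witness[where i="\<lambda>x. m - x" and j="\<lambda>x. m - x"]) auto
  also have "\<dots> = (\<Sum>x\<in>(\<lambda>b. b * n) ` {b. a \<le> b \<and> b * n \<le> m}. f (m - x) * of_nat (cl n a x))"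
  proof (rule sum.mono_neutral_right)
    show "(\<lambda>b. b * n) ` {b. a \<le> b \<and> b * n \<le> m} \<subseteq> {0..m}" by auto
    show "\<forall>x\<in>{0..m} - (\<lambda>b. b * n) ` {b. a \<le> b \<and> b * n \<le> m}. f (m - x) * of_nat (cl n a x) = 0"
    proof
      fix x assume x: "x \<in> {0..m} - (\<lambda>b. b * n) ` {b. a \<le> b \<and> b * n \<le> m}"
      have "cl n a x = 0"
      proof (rule ccontr)
        assume "cl n a x \<noteq> 0"
        then have d: "n dvd x" and le: "a \<le> x div n" unfolding cl_def by (auto split: if_splits)
        then have "x = (x div n) * n" by simp
        with le x show False by auto
      qed
      then show "f (m - x) * of_nat (cl n a x) = 0" by simp
    qed
  qed simp
  also have "\<dots> = (\<Sum>b\<in>{b. a \<le> b \<and> b * n \<le> m}. f (m - b * n) * of_nat (cl n a (b * n)))"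
    using n by (subst sum.reindex) (auto simp: inj_on_def)
  also have "\<dots> = (\<Sum>b\<in>{b. a \<le> b \<and> b * n \<le> m}. of_nat ((b - 1) choose (a - 1)) * f (m - b * n))"
    by (rule sum.cong) (use n in \<open>auto simp: cl_def mult.commute\<close>)
  finally show ?thesis .
qed

lemma hockey:
  shows "(\<Sum>b\<in>{Suc a..<K}. (b - 1) choose a) = (if Suc (Suc a) \<le> K then (K - 1) choose (Suc a) else 0)"
proof (induction K)
  case 0 then show ?case by simp
next
  case (Suc K)
  show ?case
  proof (cases "Suc a \<le> K")
    case True
    then have "(\<Sum>b\<in>{Suc a..<Suc K}. (b - 1) choose a) = ((K - 1) choose a) + (\<Sum>b\<in>{Suc a..<K}. (b - 1) choose a)"
      by (simp add: sum.atLeastLessThan_Suc)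
    also have "\<dots> = (Suc K - 1) choose Suc a"
    proof (cases "Suc (Suc a) \<le> K")
      case True
      then obtain K' where K: "K = Suc K'" by (cases K) auto
      show ?thesis using Suc.IH True by (simp add: K)
    next
      case False
      with \<open>Suc a \<le> K\<close> have "K = Suc a" by simp
      then show ?thesis using Suc.IH by simp
    qed
    finally show ?thesis using True by simp
  next
    case False
    then show ?thesis by simp
  qed
qed

lemma gser_pow:
  assumes n: "0 < n"
  shows "(gser n ^ Suc a :: 'a::comm_semiring_1 fps) $ x = of_nat (cl n (Suc a) x)"
proof (induction a arbitrary: x)
  case 0
  show ?case
  proof (cases "n dvd x")
    case True
    then obtain c where "x = n * c" by blast
    then show ?thesis using n by (auto simp: gser_def cl_def)
  next
    case False then show ?thesis by (auto simp: gser_def cl_def)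
  qed
next
  case (Suc a)
  have "(gser n ^ Suc (Suc a) :: 'a fps) $ x = (\<Sum>i=0..x. gser n $ i * (gser n ^ Suc a :: 'a fps) $ (x - i))"
    by (simp add: fps_mult_nth)
  also have "\<dots> = (\<Sum>i=0..x. gser n $ i * of_nat (cl n (Suc a) (x - i)))"
    using Suc.IH by simp
  also have "\<dots> = (\<Sum>b\<in>{b. Suc a \<le> b \<and> b * n \<le> x}. of_nat ((b - 1) choose a) * (gser n $ (x - b * n) :: 'a))"
    using L1[OF n, of "\<lambda>i. gser n $ i" "Suc a" x] by simp
  also have "\<dots> = of_nat (\<Sum>b\<in>{b. Suc a \<le> b \<and> b * n \<le> x}. ((b - 1) choose a) * (if 0 < x - b * n \<and> n dvd (x - b * n) then 1 else 0))"
    using n by (auto simp: gser_def of_nat_sum intro!: sum.cong)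
  also have "(\<Sum>b\<in>{b. Suc a \<le> b \<and> b * n \<le> x}. ((b - 1) choose a) * (if 0 < x - b * n \<and> n dvd (x - b * n) then 1 else 0)) = cl n (Suc (Suc a)) x"
  proof (cases "n dvd x")
    case True
    then obtain K where x: "x = K * n" by (metis dvd_def mult.commute)
    have set: "{b. Suc a \<le> b \<and> b * n \<le> x} = {Suc a..K}" using n by (auto simp: x)
    have "(\<Sum>b\<in>{Suc a..K}. ((b - 1) choose a) * (if 0 < x - b * n \<and> n dvd (x - b * n) then 1 else 0))
        = (\<Sum>b\<in>{Suc a..K}. if b < K then (b - 1) choose a else 0)"
    proof (rule sum.cong)
      fix b assume b: "b \<in> {Suc a..K}"
      have "x - b * n = (K - b) * n" by (simp add: x diff_mult_distrib)
      then show "((b - 1) choose a) * (if 0 < x - b * n \<and> n dvd (x - b * n) then 1 else 0) = (if b < K then (b - 1) choose a else 0)"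
        using n by auto
    qed simp
    also have "\<dots> = (\<Sum>b\<in>{Suc a..<K}. (b - 1) choose a)"
      by (rule sum.mono_neutral_cong_right) auto
    also have "\<dots> = cl n (Suc (Suc a)) x"
      using hockey[of a K] n by (simp add: cl_def x)
    finally show ?thesis using set by simp
  next
    case False
    have "\<And>b. b * n \<le> x \<Longrightarrow> \<not> n dvd (x - b * n)"
    proof
      fix b assume "b * n \<le> x" "n dvd (x - b * n)"
      then have "n dvd (x - b * n) + b * n" by (metis dvd_add dvd_triv_right)
      with \<open>b * n \<le> x\<close> False show False by simp
    qed
    then show ?thesis using False by (simp add: cl_def)
  qed
  finally show ?case .
qed



definition Aset :: "(nat \<Rightarrow> nat) \<Rightarrow> (nat \<Rightarrow> nat) \<Rightarrow> nat \<Rightarrow> nat \<Rightarrow> nat \<Rightarrow> nat \<Rightarrow> ((nat \<Rightarrow> nat) \<times> (nat \<Rightarrow> nat)) set" where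
  "Aset alpha beta l r n m = {(j, k). j \<in> {r..l} \<rightarrow>\<^sub>E (UNIV :: nat set) \<and> k \<in> {r..l} \<rightarrow>\<^sub>E (UNIV :: nat set)
                     \<and> (\<forall>i\<in>{r..l}. beta i \<le> j i \<and> alpha i \<le> k i)
                     \<and> (\<Sum>i=r..l. j i) = n
                     \<and> (\<Sum>i=r..l. k i * (\<Sum>s=i..l. j s)) = m}"

definition wt :: "(nat \<Rightarrow> nat) \<Rightarrow> (nat \<Rightarrow> nat) \<Rightarrow> nat \<Rightarrow> nat \<Rightarrow> (nat \<Rightarrow> nat) \<times> (nat \<Rightarrow> nat) \<Rightarrow> rat" where
  "wt alpha beta l r = (\<lambda>(j, k). \<Prod>i=r..l. of_nat ((j i - 1) choose (beta i - 1)) *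
                     of_nat ((k i - 1) choose (alpha i - 1)))"

definition Sf :: "(nat \<Rightarrow> nat) \<Rightarrow> (nat \<Rightarrow> nat) \<Rightarrow> nat \<Rightarrow> nat \<Rightarrow> nat \<Rightarrow> nat \<Rightarrow> rat" where
  "Sf alpha beta l r n m = sum (wt alpha beta l r) (Aset alpha beta l r n m)"

lemma Aset_finite:
  assumes pos: "\<forall>i\<in>{r..l}. 0 < beta i"
  shows "finite (Aset alpha beta l r n m)"
proof (rule finite_subset)
  show "Aset alpha beta l r n m \<subseteq> ({r..l} \<rightarrow>\<^sub>E {..n}) \<times> ({r..l} \<rightarrow>\<^sub>E {..m})"
  proof
    fix x assume x: "x \<in> Aset alpha beta l r n m"
    obtain j k where xe: "x = (j, k)" by (cases x)
    have jP: "j \<in> {r..l} \<rightarrow>\<^sub>E UNIV" and kP: "k \<in> {r..l} \<rightarrow>\<^sub>E UNIV"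
      and c: "\<forall>i\<in>{r..l}. beta i \<le> j i \<and> alpha i \<le> k i"
      and sn: "(\<Sum>i=r..l. j i) = n" and sm: "(\<Sum>i=r..l. k i * (\<Sum>s=i..l. j s)) = m"
      using x by (auto simp: Aset_def xe)
    have "j \<in> {r..l} \<rightarrow>\<^sub>E {..n}"
    proof -
      have "\<forall>i\<in>{r..l}. j i \<le> n"
        using sn member_le_sum[of _ "{r..l}" j] by auto
      then show ?thesis using jP by (auto simp: PiE_def Pi_def)
    qed
    moreover have "k \<in> {r..l} \<rightarrow>\<^sub>E {..m}"
    proof -
      have "\<forall>i\<in>{r..l}. k i \<le> m"
      proof
        fix i assume i: "i \<in> {r..l}"
        have "0 < beta i" "beta i \<le> j i" using c pos i by auto
        then have "1 \<le> j i" by linarith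
        also have "j i \<le> (\<Sum>s=i..l. j s)" using i member_le_sum[of i "{i..l}" j] by auto
        finally have "k i \<le> k i * (\<Sum>s=i..l. j s)" by simp
        also have "\<dots> \<le> m" using sm i member_le_sum[of i "{r..l}" "\<lambda>i. k i * (\<Sum>s=i..l. j s)"] by auto
        finally show "k i \<le> m" .
      qed
      then show ?thesis using kP by (auto simp: PiE_def Pi_def)
    qed
    ultimately show "x \<in> ({r..l} \<rightarrow>\<^sub>E {..n}) \<times> ({r..l} \<rightarrow>\<^sub>E {..m})" by (simp add: xe)
  qed
qed (auto intro: finite_PiE)

lemma upd_sum: fixes r :: nat assumes "r < i" shows "(\<Sum>s=i..l. (f(r:=x)) s) = (\<Sum>s=i..l. f s)"
  using assms by (intro sum.cong) auto

lemma upd_sum2: "(\<Sum>i=Suc r..l. (k(r:=y)) i * (\<Sum>s=i..l. (j(r:=x)) s)) = (\<Sum>i=Suc r..l. k i * (\<Sum>s=i..l. j s))"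
  by (rule sum.cong) (auto simp: upd_sum)

lemma upd_wt: "wt alpha beta l (Suc r) (j(r:=x), k(r:=y)) = wt alpha beta l (Suc r) (j, k)"
  unfolding wt_def by (auto intro!: prod.cong)

lemma split_sum2:
  assumes "r \<le> l"
  shows "(\<Sum>i=r..l. k i * (\<Sum>s=i..l. j s)) = k r * (\<Sum>s=r..l. j s) + (\<Sum>i=Suc r..l. k i * (\<Sum>s=i..l. j s))"
  using assms by (simp add: sum.atLeast_Suc_atMost)

lemma Sf_step:
  assumes rl: "r \<le> l" and pos: "\<forall>i\<in>{r..l}. 0 < beta i"
  shows "Sf alpha beta l r n m =
    (\<Sum>a\<in>{beta r..n}. \<Sum>b\<in>{b. alpha r \<le> b \<and> b * n \<le> m}.
        of_nat ((a - 1) choose (beta r - 1)) * of_nat ((b - 1) choose (alpha r - 1)) *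
        Sf alpha beta l (Suc r) (n - a) (m - b * n))"
proof -
  define I where "I = {beta r..n}"
  define B where "B = (\<lambda>a::nat. {b. alpha r \<le> b \<and> b * n \<le> m})"
  define T where "T = Sigma (Sigma I B) (\<lambda>ab. Aset alpha beta l (Suc r) (n - fst ab) (m - snd ab * n))"
  define h where "h = (\<lambda>(ab::nat \<times> nat, jk). of_nat ((fst ab - 1) choose (beta r - 1)) * of_nat ((snd ab - 1) choose (alpha r - 1)) *
        wt alpha beta l (Suc r) jk)"
  have pos': "\<forall>i\<in>{Suc r..l}. 0 < beta i" using pos by auto
  have finI: "finite I" by (simp add: I_def)
  have finB: "\<forall>a\<in>I. finite (B a)"
  proof
    fix a assume "a \<in> I"
    moreover have "0 < beta r" using pos rl by auto
    ultimately have "1 \<le> n" by (auto simp: I_def)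
    have "B a \<subseteq> {..m}"
    proof
      fix b assume "b \<in> B a"
      then have "b * n \<le> m" by (simp add: B_def)
      moreover have "b \<le> b * n" using \<open>1 \<le> n\<close> by simp
      ultimately have "b \<le> m" by linarith
      then show "b \<in> {..m}" by simp
    qed
    then show "finite (B a)" by (rule finite_subset) simp
  qed
  have "(\<Sum>a\<in>I. \<Sum>b\<in>B a.
        of_nat ((a - 1) choose (beta r - 1)) * of_nat ((b - 1) choose (alpha r - 1)) *
        Sf alpha beta l (Suc r) (n - a) (m - b * n))
     = (\<Sum>ab\<in>Sigma I B. \<Sum>jk\<in>Aset alpha beta l (Suc r) (n - fst ab) (m - snd ab * n). h (ab, jk))"
  proof -
    have "(\<Sum>a\<in>I. \<Sum>b\<in>B a.
        of_nat ((a - 1) choose (beta r - 1)) * of_nat ((b - 1) choose (alpha r - 1)) *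
        Sf alpha beta l (Suc r) (n - a) (m - b * n)) = (\<Sum>(a, b)\<in>Sigma I B.
        of_nat ((a - 1) choose (beta r - 1)) * of_nat ((b - 1) choose (alpha r - 1)) *
        Sf alpha beta l (Suc r) (n - a) (m - b * n))"
      by (rule sum.Sigma[OF finI finB])
    also have "\<dots> = (\<Sum>ab\<in>Sigma I B. \<Sum>jk\<in>Aset alpha beta l (Suc r) (n - fst ab) (m - snd ab * n). h (ab, jk))"
      by (rule sum.cong) (auto simp: Sf_def h_def sum_distrib_left)
    finally show ?thesis .
  qed
  also have "\<dots> = sum (\<lambda>(ab, jk). h (ab, jk)) T"
    unfolding T_def
    by (rule sum.Sigma) (use finI finB Aset_finite[OF pos'] in \<open>auto intro: finite_SigmaI\<close>)
  also have "\<dots> = sum h T" by simp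
  also have "\<dots> = Sf alpha beta l r n m"
    unfolding Sf_def
  proof (rule sym, rule sum.reindex_bij_witness[where i="\<lambda>(ab, (j, k)). (j(r := fst ab), k(r := snd ab))"
        and j="\<lambda>(j, k). ((j r, k r), (j(r := undefined), k(r := undefined)))"])
    fix x assume "x \<in> Aset alpha beta l r n m"
    then show "(case case x of (j, k) \<Rightarrow> ((j r, k r), j(r := undefined), k(r := undefined)) of
               (ab, j, k) \<Rightarrow> (j(r := fst ab), k(r := snd ab))) = x"
      by (auto simp: split_def)
  next
    fix x assume x: "x \<in> Aset alpha beta l r n m"
    obtain j k where xe: "x = (j, k)" by (cases x)
    have jP: "j \<in> {r..l} \<rightarrow>\<^sub>E UNIV" and kP: "k \<in> {r..l} \<rightarrow>\<^sub>E UNIV"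
      and c: "\<forall>i\<in>{r..l}. beta i \<le> j i \<and> alpha i \<le> k i"
      and sn: "(\<Sum>i=r..l. j i) = n" and sm: "(\<Sum>i=r..l. k i * (\<Sum>s=i..l. j s)) = m"
      using x by (auto simp: Aset_def xe)
    have sn': "j r + (\<Sum>i=Suc r..l. j i) = n" using sn rl by (simp add: sum.atLeast_Suc_atMost)
    have sm': "k r * n + (\<Sum>i=Suc r..l. k i * (\<Sum>s=i..l. j s)) = m" using sm split_sum2[OF rl, of k j] sn by simp
    have "(\<Sum>i=Suc r..l. (j(r := undefined)) i) = (\<Sum>i=Suc r..l. j i)" by (rule upd_sum) simp
    moreover have "(\<Sum>i=Suc r..l. (k(r := undefined)) i * (\<Sum>s=i..l. (j(r := undefined)) s)) = (\<Sum>i=Suc r..l. k i * (\<Sum>s=i..l. j s))"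
      by (rule upd_sum2)
    moreover have "j(r := undefined) \<in> {Suc r..l} \<rightarrow>\<^sub>E UNIV" "k(r := undefined) \<in> {Suc r..l} \<rightarrow>\<^sub>E UNIV"
      using jP kP by (auto simp: PiE_def extensional_def)
    ultimately have "(j(r := undefined), k(r := undefined)) \<in> Aset alpha beta l (Suc r) (n - j r) (m - k r * n)"
      using c sn' sm' by (auto simp: Aset_def)
    moreover have "j r \<in> I" "k r \<in> B (j r)" using c rl sn' sm' by (auto simp: I_def B_def)
    ultimately show "(case x of (j, k) \<Rightarrow> ((j r, k r), j(r := undefined), k(r := undefined))) \<in> T"
      by (simp add: T_def xe)
  next
    fix y assume y: "y \<in> T"
    obtain a b j k where ye: "y = ((a, b), (j, k))" by (metis prod.collapse)
    have "(j, k) \<in> Aset alpha beta l (Suc r) (n - a) (m - b * n)" using y by (simp add: T_def ye)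
    then have "j r = undefined" "k r = undefined" by (auto simp: Aset_def PiE_def extensional_def)
    then show "(case case y of (ab, j, k) \<Rightarrow> (j(r := fst ab), k(r := snd ab)) of
               (j, k) \<Rightarrow> ((j r, k r), j(r := undefined), k(r := undefined))) = y"
      by (simp add: ye fun_upd_idem)
  next
    fix y assume y: "y \<in> T"
    obtain a b j k where ye: "y = ((a, b), (j, k))" by (metis prod.collapse)
    have ab: "a \<in> I" "b \<in> B a" and jk: "(j, k) \<in> Aset alpha beta l (Suc r) (n - a) (m - b * n)"
      using y by (auto simp: T_def ye)
    have jP: "j \<in> {Suc r..l} \<rightarrow>\<^sub>E UNIV" and kP: "k \<in> {Suc r..l} \<rightarrow>\<^sub>E UNIV"
      and c: "\<forall>i\<in>{Suc r..l}. beta i \<le> j i \<and> alpha i \<le> k i"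
      and sn: "(\<Sum>i=Suc r..l. j i) = n - a" and sm: "(\<Sum>i=Suc r..l. k i * (\<Sum>s=i..l. j s)) = m - b * n"
      using jk by (auto simp: Aset_def)
    have an: "a \<le> n" "beta r \<le> a" "alpha r \<le> b" "b * n \<le> m" using ab by (auto simp: I_def B_def)
    have s1: "(\<Sum>i=r..l. (j(r:=a)) i) = n"
      using rl an sn upd_sum[where r=r and i="Suc r" and l=l and f=j and x=a] by (simp add: sum.atLeast_Suc_atMost)
    have s2: "(\<Sum>i=r..l. (k(r:=b)) i * (\<Sum>s=i..l. (j(r:=a)) s)) = m"
      using split_sum2[OF rl, of "k(r:=b)" "j(r:=a)"] s1 upd_sum2[of k r b j a] sm an by simp
    have "j(r:=a) \<in> {r..l} \<rightarrow>\<^sub>E UNIV" "k(r:=b) \<in> {r..l} \<rightarrow>\<^sub>E UNIV"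
      using jP kP rl by (auto simp: PiE_def extensional_def)
    moreover have "\<forall>i\<in>{r..l}. beta i \<le> (j(r:=a)) i \<and> alpha i \<le> (k(r:=b)) i"
    proof
      fix i assume i: "i \<in> {r..l}"
      show "beta i \<le> (j(r:=a)) i \<and> alpha i \<le> (k(r:=b)) i"
      proof (cases "i = r")
        case True then show ?thesis using an by simp
      next
        case False then have "i \<in> {Suc r..l}" using i by auto
        then show ?thesis using c False by simp
      qed
    qed
    ultimately show "(case y of (ab, j, k) \<Rightarrow> (j(r := fst ab), k(r := snd ab))) \<in> Aset alpha beta l r n m"
      using s1 s2 by (simp add: ye Aset_def)
  next
    fix x assume x: "x \<in> Aset alpha beta l r n m"
    obtain j k where xe: "x = (j, k)" by (cases x)
    show "h (case x of (j, k) \<Rightarrow> ((j r, k r), j(r := undefined), k(r := undefined))) = wt alpha beta l r x"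
      using rl by (simp add: xe h_def upd_wt wt_def prod.atLeast_Suc_atMost)
  qed
  finally show ?thesis by (simp add: I_def B_def)
qed



lemma Rop_pow_nth:
  "((Rop ^^ a) g) $ n = (if a = 0 then g $ n else if n = 0 then 0 else g $ n * qgeom n ^ a)"
proof (induction a)
  case 0 then show ?case by simp
next
  case (Suc a) then show ?case by (simp add: Rop_def)
qed

lemma qgeom_gser: "qgeom n = gser n"
  by (simp add: qgeom_def gser_def)

lemma yser_gser: "yser = gser 1"
  by (rule fps_ext) (simp add: yser_def gser_def)

lemma yser_pow_nth:
  assumes "0 < b"
  shows "(yser ^ b) $ a = fps_const (of_nat (if b \<le> a then (a - 1) choose (b - 1) else 0))"
proof -
  obtain b' where b: "b = Suc b'" using assms by (cases b) auto
  show ?thesis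
    using gser_pow[of 1 b' a, where 'a="rat fps"]
    by (simp add: yser_gser b cl_def fps_of_nat)
qed

lemma nest_step:
  assumes rl: "r \<le> l" and pa: "0 < alpha r" and pb: "0 < beta r"
    and IH: "\<And>n m. (nestR alpha beta l (Suc r)) $ n $ m = Sf alpha beta l (Suc r) n m"
  shows "(nestR alpha beta l r) $ n $ m =
    (\<Sum>a\<in>{beta r..n}. \<Sum>b\<in>{b. alpha r \<le> b \<and> b * n \<le> m}.
        of_nat ((a - 1) choose (beta r - 1)) * of_nat ((b - 1) choose (alpha r - 1)) *
        Sf alpha beta l (Suc r) (n - a) (m - b * n))"
proof -
  define N where "N = nestR alpha beta l (Suc r)"
  define ca where "ca = (\<lambda>a. of_nat (if beta r \<le> a then (a - 1) choose (beta r - 1) else 0) :: rat)"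
  have nr: "nestR alpha beta l r = (Rop ^^ alpha r) (yser ^ beta r * N)"
    using rl by (subst nestR.simps) (simp add: N_def)
  show ?thesis
  proof (cases "n = 0")
    case True
    then show ?thesis using pa pb rl by (simp add: nr Rop_pow_nth)
  next
    case False
    then have n: "0 < n" by simp
    obtain a' where a': "alpha r = Suc a'" using pa by (cases "alpha r") auto
    define P where "P = (yser ^ beta r * N) $ n"
    have Pi: "P $ i = (\<Sum>a=0..n. ca a * Sf alpha beta l (Suc r) (n - a) i)" for i
    proof -
      have "P = (\<Sum>a=0..n. fps_const (ca a) * N $ (n - a))"
        by (simp add: P_def fps_mult_nth yser_pow_nth[OF pb] ca_def)
      then show ?thesis by (simp add: fps_sum_nth N_def IH)
    qed
    have "(nestR alpha beta l r) $ n $ m = (P * qgeom n ^ alpha r) $ m"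
      using pa n by (simp add: nr Rop_pow_nth P_def)
    also have "\<dots> = (\<Sum>i=0..m. P $ i * of_nat (cl n (alpha r) (m - i)))"
      by (simp only: fps_mult_nth qgeom_gser a' gser_pow[OF n])
    also have "\<dots> = (\<Sum>b\<in>{b. alpha r \<le> b \<and> b * n \<le> m}. of_nat ((b - 1) choose (alpha r - 1)) * P $ (m - b * n))"
      by (rule L1[OF n])
    also have "\<dots> = (\<Sum>b\<in>{b. alpha r \<le> b \<and> b * n \<le> m}. \<Sum>a=0..n. of_nat ((b - 1) choose (alpha r - 1)) *
         (ca a * Sf alpha beta l (Suc r) (n - a) (m - b * n)))"
      by (simp add: Pi sum_distrib_left)
    also have "\<dots> = (\<Sum>a=0..n. \<Sum>b\<in>{b. alpha r \<le> b \<and> b * n \<le> m}. of_nat ((b - 1) choose (alpha r - 1)) *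
         (ca a * Sf alpha beta l (Suc r) (n - a) (m - b * n)))"
      by (rule sum.swap)
    also have "\<dots> = (\<Sum>a\<in>{beta r..n}. \<Sum>b\<in>{b. alpha r \<le> b \<and> b * n \<le> m}. of_nat ((b - 1) choose (alpha r - 1)) *
         (ca a * Sf alpha beta l (Suc r) (n - a) (m - b * n)))"
      by (rule sum.mono_neutral_right) (auto simp: ca_def)
    also have "\<dots> = (\<Sum>a\<in>{beta r..n}. \<Sum>b\<in>{b. alpha r \<le> b \<and> b * n \<le> m}.
        of_nat ((a - 1) choose (beta r - 1)) * of_nat ((b - 1) choose (alpha r - 1)) *
        Sf alpha beta l (Suc r) (n - a) (m - b * n))"
      by (intro sum.cong refl) (simp add: ca_def algebra_simps)
    finally show ?thesis .
  qed
qed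


lemma main:
  assumes "\<forall>i\<in>{r..l}. 0 < alpha i \<and> 0 < beta i" and "r \<le> Suc l"
  shows "(nestR alpha beta l r) $ n $ m = Sf alpha beta l r n m"
  using assms
proof (induction "Suc l - r" arbitrary: r n m)
  case 0
  then have r: "r = Suc l" by simp
  have N: "nestR alpha beta l (Suc l) = 1" by (subst nestR.simps) simp
  have A: "Aset alpha beta l (Suc l) n m = (if n = 0 \<and> m = 0 then {(\<lambda>_. undefined, \<lambda>_. undefined)} else {})"
    by (auto simp: Aset_def)
  show ?case unfolding r Sf_def N A by (simp add: wt_def)
next
  case (Suc d)
  then have rl: "r \<le> l" by simp
  have IH: "\<And>n m. (nestR alpha beta l (Suc r)) $ n $ m = Sf alpha beta l (Suc r) n m"
    using Suc by auto
  have pa: "0 < alpha r" "0 < beta r" using Suc.prems rl by auto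
  show ?case
    using nest_step[OF rl pa IH] Sf_step[OF rl] Suc.prems by simp
qed


theorem theorem3p3:
  fixes l :: nat and alpha beta :: "nat \<Rightarrow> nat"
  assumes "1 \<le> l"
    and "\<forall>r\<in>{1..l}. 0 < alpha r \<and> 0 < beta r"
  shows "\<forall>n m. fps_nth (fps_nth (nestR alpha beta l 1) n) m =
     (\<Sum>(j, k) \<in> {(j, k). j \<in> {1..l} \<rightarrow>\<^sub>E (UNIV :: nat set) \<and> k \<in> {1..l} \<rightarrow>\<^sub>E (UNIV :: nat set)
                     \<and> (\<forall>r\<in>{1..l}. beta r \<le> j r \<and> alpha r \<le> k r)
                     \<and> (\<Sum>r=1..l. j r) = n
                     \<and> (\<Sum>r=1..l. k r * (\<Sum>s=r..l. j s)) = m}.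
        (\<Prod>r=1..l. of_nat ((j r - 1) choose (beta r - 1)) *
                     of_nat ((k r - 1) choose (alpha r - 1)) :: rat))"
proof (intro allI)
  fix n m
  have "fps_nth (fps_nth (nestR alpha beta l 1) n) m = Sf alpha beta l 1 n m"
    by (rule main) (use assms in auto)
  then show "fps_nth (fps_nth (nestR alpha beta l 1) n) m =
     (\<Sum>(j, k) \<in> {(j, k). j \<in> {1..l} \<rightarrow>\<^sub>E (UNIV :: nat set) \<and> k \<in> {1..l} \<rightarrow>\<^sub>E (UNIV :: nat set)
                     \<and> (\<forall>r\<in>{1..l}. beta r \<le> j r \<and> alpha r \<le> k r)
                     \<and> (\<Sum>r=1..l. j r) = n
                     \<and> (\<Sum>r=1..l. k r * (\<Sum>s=r..l. j s)) = m}.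
        (\<Prod>r=1..l. of_nat ((j r - 1) choose (beta r - 1)) *
                     of_nat ((k r - 1) choose (alpha r - 1)) :: rat))"
    unfolding Sf_def Aset_def wt_def .
qed

end
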